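(* Assume the setting in the context with Assumptions (A1), (A2), (A3). For any $z\in\mathcal X$, $\min_{x\in X}\max_{y\in\mathcal Y}\hat f_r(x,y;z)=\max_{y\in\mathcal Y}\min_{x\in X}\hat f_r(x,y;z)$; hence $P(z)=\min_{x\in X}\Phi(x;z)=\max_{y\in\mathcal Y}\Psi_r(y;z)$.
   Context: $\mathcal X=\mathbb R^{d_1\times r}$ (Frobenius norm), $\mathcal Y=\mathbb R^{d_2}$, $\mathcal M=\{x:x^\top x=I_r\}$, $c(x)=x^\top x-I_r$, $A(x)=x(\frac32I_r-\frac12x^\top x)$; $C>\frac12+\sup_{x\in\mathcal M}\|x\|$, $X=\{x:\|x\|\le C\}$, $\bar X=\{A(x):\|x\|\le C\}$. $\partial$ is the Fréchet subdifferential. (A1) $h:\mathcal Y\to\mathbb R\cup\{+\infty\}$ proper, closed, $\zeta$-weakly convex ($h+\frac\zeta2\|\cdot\|^2$ convex), closed domain $Y$, locally Lipschitz on $Y$, $Y$ bounded. (A2) $f$ differentiable on an open set containing $\bar X\times Y$ with $\|\nabla_xf(x_1,y_1)-\nabla_xf(x_2,y_2)\|\le L_{xx}\|x_1-x_2\|+L_{xy}\|y_1-y_2\|$, $\|\nabla_yf(x_1,y_1)-\nabla_yf(x_2,y_2)\|\le L_{yx}\|x_1-x_2\|+L_{yy}\|y_1-y_2\|$ on $\bar X\times Y$. (A3) With $f_r=f-h$, there is $\mu>0$ with $\max_wf_r(x,w)-f_r(x,y)\le\frac1{2\mu}\mathrm{dist}^2(0,-\nabla_yf(x,y)+\partial h(y))$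 for all $x\in\bar X,y\in Y$. For $\rho>0$: $\tilde f(x,y)=f(A(x),y)+\frac\rho4\|c(x)\|^2$, $\tilde f_r=\tilde f-h$; $l$ is the (blockwise) Lipschitz constant of $\nabla\tilde f$ on $X\times Y$; standing choice $p>l$. For $x\in X,y\in Y,z\in\mathcal X$: $\hat f(x,y;z)=\tilde f(x,y)+\frac p2\|x-z\|^2$, $\hat f_r=\hat f-h$, $\Phi(x;z)=\max_{y\in\mathcal Y}\hat f_r(x,y;z)$, $\Psi_r(y;z)=\min_{x\in X}\hat f(x,y;z)-h(y)$, $P(z)=\min_{x\in X}\max_{y\in\mathcal Y}\hat f_r(x,y;z)$. *)

theory Defs
  imports "HOL-Analysis.Analysis" "HOL-Library.Extended_Real"
begin

text \<open>Matrices in R^(d1 x r) are rendered as real^'r^'d1 (rows indexed by 'd1);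
the Euclidean norm on this type is the Frobenius norm and the inner product is
the Frobenius inner product.\<close>

definition cmap :: "real^'r^'d \<Rightarrow> real^'r^'r" where
  "cmap x = transpose x ** x - mat 1"

definition Aret :: "real^'r^'d \<Rightarrow> real^'r^'d" where
  "Aret x = x ** ((3/2) *\<^sub>R mat 1 - (1/2) *\<^sub>R (transpose x ** x))"

definition Stiefel :: "(real^'r^'d) set" where
  "Stiefel = {x. transpose x ** x = mat 1}"

definition frechet_subdiff :: "('a::real_inner \<Rightarrow> ereal) \<Rightarrow> 'a \<Rightarrow> 'a set" where
  "frechet_subdiff h y = {v. \<bar>h y\<bar> \<noteq> \<infinity> \<and>
     0 \<le> Liminf (at y) (\<lambda>u. (h u - h y - ereal (v \<bullet> (u - y))) / ereal (norm (u - y)))}"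

end

theory Submission
  imports Defs
begin

locale mm =
  fixes tf :: "'a::euclidean_space \<Rightarrow> 'b::euclidean_space \<Rightarrow> real"
    and gx :: "'a \<Rightarrow> 'b \<Rightarrow> 'a" and gy :: "'a \<Rightarrow> 'b \<Rightarrow> 'b"
    and K :: "'a set" and Y :: "'b set" and h :: "'b \<Rightarrow> ereal"
    and l p :: real and z :: 'a
  assumes K: "convex K" "compact K" "K \<noteq> {}"
    and Y: "convex Y" "compact Y" "Y \<noteq> {}"
    and deriv: "\<forall>x\<in>K. \<forall>y\<in>Y. ((\<lambda>(x, y). tf x y) has_derivative
           (\<lambda>(dx, dy). gx x y \<bullet> dx + gy x y \<bullet> dy)) (at (x, y))"
    and gx_lip: "\<forall>x1\<in>K. \<forall>x2\<in>K. \<forall>y1\<in>Y. \<forall>y2\<in>Y.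
        norm (gx x1 y1 - gx x2 y2) \<le> l * norm (x1 - x2) + l * norm (y1 - y2)"
    and gy_lip: "\<forall>x1\<in>K. \<forall>x2\<in>K. \<forall>y1\<in>Y. \<forall>y2\<in>Y.
        norm (gy x1 y1 - gy x2 y2) \<le> l * norm (x1 - x2) + l * norm (y1 - y2)"
    and pl: "p > l"
    and hY: "Y = {y. h y \<noteq> \<infinity>}" and hfin: "\<forall>y. h y \<noteq> -\<infinity>"
    and hcont: "continuous_on Y (\<lambda>y. real_of_ereal (h y))"
begin

lemma yline_deriv:
  assumes x: "x \<in> K" and y1: "y1 \<in> Y" and y2: "y2 \<in> Y" and s: "0 \<le> s" "s \<le> 1"
  shows "((\<lambda>s. tf x (y1 + s *\<^sub>R (y2 - y1))) has_real_derivative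
            (gy x (y1 + s *\<^sub>R (y2 - y1)) \<bullet> (y2 - y1))) (at s)"
proof -
  have ys: "y1 + s *\<^sub>R (y2 - y1) \<in> Y"
    using Y(1) y1 y2 s convexD_alt[of Y y1 y2 s] by (simp add: algebra_simps)
  have d1: "((\<lambda>s. (x, y1 + s *\<^sub>R (y2 - y1))) has_derivative (\<lambda>ds. (0, ds *\<^sub>R (y2 - y1)))) (at s)"
    by (auto intro!: derivative_eq_intros)
  have "(((\<lambda>(x, y). tf x y) \<circ> (\<lambda>s. (x, y1 + s *\<^sub>R (y2 - y1)))) has_derivative
     ((\<lambda>(dx, dy). gx x (y1 + s *\<^sub>R (y2 - y1)) \<bullet> dx + gy x (y1 + s *\<^sub>R (y2 - y1)) \<bullet> dy) \<circ> (\<lambda>ds. (0, ds *\<^sub>R (y2 - y1))))) (at s)"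
    using diff_chain_at[OF d1] deriv x ys by blast
  then show ?thesis
    by (intro has_derivative_imp_has_field_derivative) (auto simp: o_def)
qed

lemma xline_deriv:
  assumes x1: "x1 \<in> K" and x2: "x2 \<in> K" and y: "y \<in> Y" and s: "0 \<le> s" "s \<le> 1"
  shows "((\<lambda>s. tf (x1 + s *\<^sub>R (x2 - x1)) y) has_real_derivative
            (gx (x1 + s *\<^sub>R (x2 - x1)) y \<bullet> (x2 - x1))) (at s)"
proof -
  have xs: "x1 + s *\<^sub>R (x2 - x1) \<in> K"
    using K(1) x1 x2 s convexD_alt[of K x1 x2 s] by (simp add: algebra_simps)
  have d1: "((\<lambda>s. (x1 + s *\<^sub>R (x2 - x1), y)) has_derivative (\<lambda>ds. (ds *\<^sub>R (x2 - x1), 0))) (at s)"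
    by (auto intro!: derivative_eq_intros)
  have "(((\<lambda>(x, y). tf x y) \<circ> (\<lambda>s. (x1 + s *\<^sub>R (x2 - x1), y))) has_derivative
     ((\<lambda>(dx, dy). gx (x1 + s *\<^sub>R (x2 - x1)) y \<bullet> dx + gy (x1 + s *\<^sub>R (x2 - x1)) y \<bullet> dy) \<circ> (\<lambda>ds. (ds *\<^sub>R (x2 - x1), 0)))) (at s)"
    using diff_chain_at[OF d1] deriv xs y by blast
  then show ?thesis
    by (intro has_derivative_imp_has_field_derivative) (auto simp: o_def)
qed

lemma mvt_y:
  assumes x: "x \<in> K" and y1: "y1 \<in> Y" and y2: "y2 \<in> Y"
  shows "\<exists>\<xi>\<in>Y. norm (\<xi> - y1) \<le> norm (y2 - y1) \<and> tf x y2 - tf x y1 = gy x \<xi> \<bullet> (y2 - y1)"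
proof (cases "y1 = y2")
  case True then show ?thesis using y1 by auto
next
  case False
  obtain s where s: "0 < s" "s < 1" and eq: "tf x (y1 + 1 *\<^sub>R (y2 - y1)) - tf x (y1 + 0 *\<^sub>R (y2 - y1))
     = (1 - 0) * (gy x (y1 + s *\<^sub>R (y2 - y1)) \<bullet> (y2 - y1))"
    using MVT2[of 0 1 "\<lambda>s. tf x (y1 + s *\<^sub>R (y2 - y1))" "\<lambda>s. gy x (y1 + s *\<^sub>R (y2 - y1)) \<bullet> (y2 - y1)"]
      yline_deriv[OF x y1 y2] by auto
  have ys: "y1 + s *\<^sub>R (y2 - y1) \<in> Y"
    using Y(1) y1 y2 s convexD_alt[of Y y1 y2 s] by (simp add: algebra_simps)
  have "norm (y1 + s *\<^sub>R (y2 - y1) - y1) \<le> norm (y2 - y1)"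
    using s by (simp add: mult_left_le_one_le)
  then show ?thesis using eq ys by (intro bexI[of _ "y1 + s *\<^sub>R (y2 - y1)"]) auto
qed


definition fh where "fh x y = tf x y + p / 2 * (norm (x - z))\<^sup>2"

lemma strong_conv:
  assumes y: "y \<in> Y" and m: "m \<in> K" and x: "x \<in> K"
    and mmin: "\<forall>x\<in>K. fh m y \<le> fh x y"
  shows "fh x y - fh m y \<ge> (p - l) / 2 * (norm (x - m))\<^sup>2"
proof -
  define d where "d = x - m"
  define a where "a = m - z"
  define N where "N = d \<bullet> d"
  define \<theta> where "\<theta> t = tf (m + t *\<^sub>R d) y + p / 2 * (a \<bullet> a + 2 * t * (a \<bullet> d) + t\<^sup>2 * N)" for t
  define \<theta>' where "\<theta>' t = gx (m + t *\<^sub>R d) y \<bullet> d + p * (a \<bullet> d + t * N)" for t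
  have N: "N = (norm (x - m))\<^sup>2" by (simp add: N_def d_def power2_norm_eq_inner)
  have N0: "N \<ge> 0" by (simp add: N_def)
  have th: "\<theta> t = fh (m + t *\<^sub>R d) y" for t
  proof -
    have "(norm (m + t *\<^sub>R d - z))\<^sup>2 = (a + t *\<^sub>R d) \<bullet> (a + t *\<^sub>R d)"
      by (simp add: power2_norm_eq_inner a_def algebra_simps)
    also have "\<dots> = a \<bullet> a + 2 * t * (a \<bullet> d) + t\<^sup>2 * N"
      by (simp add: inner_add_left inner_add_right N_def power2_eq_square inner_commute algebra_simps)
    finally show ?thesis by (simp add: \<theta>_def fh_def)
  qed
  have dth: "(\<theta> has_real_derivative \<theta>' t) (at t)" if "0 \<le> t" "t \<le> 1" for t
  proof -
    have "((\<lambda>s. tf (m + s *\<^sub>R (x - m)) y) has_real_derivative (gx (m + t *\<^sub>R (x - m)) y \<bullet> (x - m))) (at t)"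
      using xline_deriv[OF m x y that] .
    then have "((\<lambda>s. tf (m + s *\<^sub>R d) y) has_real_derivative (gx (m + t *\<^sub>R d) y \<bullet> d)) (at t)"
      by (simp add: d_def)
    then show ?thesis unfolding \<theta>_def \<theta>'_def
      by (auto intro!: derivative_eq_intros simp: algebra_simps power2_eq_square)
  qed
  have mem: "m + t *\<^sub>R d \<in> K" if "0 \<le> t" "t \<le> 1" for t
    using K(1) m x that convexD_alt[of K m x t] by (simp add: d_def algebra_simps)
  have t0: "\<theta>' 0 \<ge> 0"
  proof (rule ccontr)
    assume "\<not> ?thesis"
    then obtain e where e: "e > 0" "\<forall>h>0. h < e \<longrightarrow> \<theta> 0 > \<theta> (0 + h)"
      using DERIV_neg_dec_right[OF dth[of 0]] by force
    define t where "t = min (e/2) (1/2)"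
    have "t > 0" "t < e" "t \<le> 1" using e by (auto simp: t_def)
    then have "\<theta> 0 > \<theta> t" using e by auto
    moreover have "\<theta> 0 \<le> \<theta> t" using th mmin mem[OF _ \<open>t \<le> 1\<close>] \<open>t > 0\<close> by simp
    ultimately show False by simp
  qed
  define \<omega> where "\<omega> t = \<theta> t - t * \<theta>' 0 - (p - l) / 2 * t\<^sup>2 * N" for t
  define \<omega>' where "\<omega>' t = \<theta>' t - \<theta>' 0 - (p - l) * t * N" for t
  have dom: "(\<omega> has_real_derivative \<omega>' t) (at t)" if "0 \<le> t" "t \<le> 1" for t
  proof -
    have a: "((\<lambda>t. t * \<theta>' 0) has_real_derivative \<theta>' 0) (at t)"
      by (auto intro!: derivative_eq_intros)
    have b: "((\<lambda>t. (p - l) / 2 * t\<^sup>2 * N) has_real_derivative (p - l) * t * N) (at t)"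
      by (auto intro!: derivative_eq_intros)
    show ?thesis unfolding \<omega>_def \<omega>'_def
      by (rule DERIV_diff[OF DERIV_diff[OF dth[OF that] a] b])
  qed
  have om: "\<omega>' t \<ge> 0" if "0 \<le> t" "t \<le> 1" for t
  proof -
    have "norm (gx (m + t *\<^sub>R d) y - gx m y) \<le> l * norm (m + t *\<^sub>R d - m) + l * norm (y - y)"
      using gx_lip mem[OF that] m y by blast
    then have g: "norm (gx (m + t *\<^sub>R d) y - gx m y) \<le> l * t * norm d" using that by simp
    have "- ((gx (m + t *\<^sub>R d) y - gx m y) \<bullet> d) \<le> norm (gx (m + t *\<^sub>R d) y - gx m y) * norm d"
      by (metis abs_le_D2 Cauchy_Schwarz_ineq2)
    also have "\<dots> \<le> l * t * norm d * norm d" using g by (simp add: mult_right_mono)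
    also have "\<dots> = l * t * N" by (simp add: N_def power2_norm_eq_inner[symmetric] power2_eq_square)
    finally have "(gx (m + t *\<^sub>R d) y - gx m y) \<bullet> d \<ge> - (l * t * N)" by linarith
    then show ?thesis unfolding \<omega>'_def \<theta>'_def by (simp add: inner_diff_left algebra_simps)
  qed
  obtain s where s: "0 < s" "s < 1" "\<omega> 1 - \<omega> 0 = (1 - 0) * \<omega>' s"
    using MVT2[of 0 1 \<omega> \<omega>'] dom by force
  have "\<omega> 1 \<ge> \<omega> 0" using s om[of s] by simp
  then have "\<theta> 1 - \<theta> 0 \<ge> \<theta>' 0 + (p - l) / 2 * N" by (simp add: \<omega>_def)
  moreover have "\<theta> 1 = fh x y" "\<theta> 0 = fh m y" using th[of 1] th[of 0] by (simp_all add: d_def)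
  ultimately show ?thesis using t0 N by simp
qed


lemma cont_x: assumes y: "y \<in> Y" shows "continuous_on K (\<lambda>x. fh x y)"
proof -
  have "isCont (\<lambda>x. tf x y) x" if x: "x \<in> K" for x
  proof -
    have d1: "((\<lambda>x. (x, y)) has_derivative (\<lambda>dx. (dx, 0))) (at x)"
      by (auto intro!: derivative_eq_intros)
    have "(((\<lambda>(x, y). tf x y) \<circ> (\<lambda>x. (x, y))) has_derivative
       ((\<lambda>(dx, dy). gx x y \<bullet> dx + gy x y \<bullet> dy) \<circ> (\<lambda>dx. (dx, 0)))) (at x)"
      using diff_chain_at[OF d1] deriv x y by blast
    then show ?thesis using has_derivative_continuous by (fastforce simp: o_def)
  qed
  then have "continuous_on K (\<lambda>x. tf x y)" by (simp add: continuous_at_imp_continuous_on)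
  then show ?thesis unfolding fh_def by (intro continuous_intros)
qed

lemma min_ex: assumes y: "y \<in> Y" shows "\<exists>m\<in>K. \<forall>x\<in>K. fh m y \<le> fh x y"
  using continuous_attains_inf[OF K(2) K(3) cont_x[OF y]] by blast

definition xm where "xm y = (SOME m. m \<in> K \<and> (\<forall>x\<in>K. fh m y \<le> fh x y))"

lemma xm: assumes y: "y \<in> Y" shows "xm y \<in> K" "\<forall>x\<in>K. fh (xm y) y \<le> fh x y"
  using someI_ex[of "\<lambda>m. m \<in> K \<and> (\<forall>x\<in>K. fh m y \<le> fh x y)"] min_ex[OF y]
  unfolding xm_def by blast+

lemma gy_bound: "\<exists>M\<ge>0. \<forall>x\<in>K. \<forall>y\<in>Y. norm (gy x y) \<le> M"
proof -
  obtain x0 where x0: "x0 \<in> K" using K(3) by blast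
  obtain y0 where y0: "y0 \<in> Y" using Y(3) by blast
  obtain B1 where B1: "\<forall>x\<in>K. norm x \<le> B1" using compact_imp_bounded[OF K(2)] bounded_iff by blast
  obtain B2 where B2: "\<forall>y\<in>Y. norm y \<le> B2" using compact_imp_bounded[OF Y(2)] bounded_iff by blast
  define M where "M = norm (gy x0 y0) + \<bar>l\<bar> * (2 * B1 + 2 * B2)"
  have "norm (gy x y) \<le> M" if x: "x \<in> K" and y: "y \<in> Y" for x y
  proof -
    have "norm (gy x y - gy x0 y0) \<le> l * norm (x - x0) + l * norm (y - y0)"
      using gy_lip x y x0 y0 by blast
    also have "\<dots> \<le> \<bar>l\<bar> * norm (x - x0) + \<bar>l\<bar> * norm (y - y0)"
      by (intro add_mono mult_right_mono) auto
    also have "\<dots> \<le> \<bar>l\<bar> * (2 * B1) + \<bar>l\<bar> * (2 * B2)"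
    proof (intro add_mono mult_left_mono)
      show "norm (x - x0) \<le> 2 * B1" using B1 x x0 norm_triangle_ineq4[of x x0] by (smt (verit) bspec)
      show "norm (y - y0) \<le> 2 * B2" using B2 y y0 norm_triangle_ineq4[of y y0] by (smt (verit) bspec)
    qed auto
    finally show ?thesis unfolding M_def using norm_triangle_ineq2[of "gy x y" "gy x0 y0"]
      by (simp add: algebra_simps)
  qed
  moreover have "M \<ge> 0" unfolding M_def using B1 B2 x0 y0 norm_ge_zero
    by (smt (verit, best) mult_nonneg_nonneg abs_ge_zero)
  ultimately show ?thesis by blast
qed

lemma psi_lip: "\<exists>M\<ge>0. \<forall>u\<in>Y. \<forall>v\<in>Y. fh (xm u) u \<le> fh (xm v) v + M * norm (u - v)"
proof -
  obtain M where M: "M \<ge> 0" "\<forall>x\<in>K. \<forall>y\<in>Y. norm (gy x y) \<le> M" using gy_bound by blast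
  have "fh (xm u) u \<le> fh (xm v) v + M * norm (u - v)" if u: "u \<in> Y" and v: "v \<in> Y" for u v
  proof -
    obtain \<xi> where \<xi>: "\<xi> \<in> Y" "tf (xm v) u - tf (xm v) v = gy (xm v) \<xi> \<bullet> (u - v)"
      using mvt_y[OF xm(1)[OF v] v u] by blast
    have "gy (xm v) \<xi> \<bullet> (u - v) \<le> norm (gy (xm v) \<xi>) * norm (u - v)" by (rule norm_cauchy_schwarz)
    also have "\<dots> \<le> M * norm (u - v)" using M xm(1)[OF v] \<xi>(1) by (intro mult_right_mono) auto
    finally have "fh (xm v) u \<le> fh (xm v) v + M * norm (u - v)" using \<xi> by (simp add: fh_def)
    moreover have "fh (xm u) u \<le> fh (xm v) u" using xm[OF u] xm(1)[OF v] by blast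
    ultimately show ?thesis by linarith
  qed
  then show ?thesis using M by blast
qed

lemma psi_cont: "continuous_on Y (\<lambda>y. fh (xm y) y)"
proof -
  obtain M where M: "M \<ge> 0" "\<forall>u\<in>Y. \<forall>v\<in>Y. fh (xm u) u \<le> fh (xm v) v + M * norm (u - v)"
    using psi_lip by blast
  have "M-lipschitz_on Y (\<lambda>y. fh (xm y) y)"
  proof (rule lipschitz_onI)
    fix u v assume "u \<in> Y" "v \<in> Y"
    then show "dist (fh (xm u) u) (fh (xm v) v) \<le> M * dist u v"
      using M(2) by (fastforce simp: dist_real_def dist_norm norm_minus_commute abs_le_iff)
  qed (use M in auto)
  then show ?thesis by (rule lipschitz_on_continuous_on)
qed


lemma main:
  "\<exists>xs\<in>K. \<exists>ys\<in>Y. (\<forall>x\<in>K. fh xs ys \<le> fh x ys)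
     \<and> (\<forall>y\<in>Y. fh (xm y) y - real_of_ereal (h y) \<le> fh xs ys - real_of_ereal (h ys))
     \<and> gy xs ys \<in> frechet_subdiff h ys"
proof -
  define hr where "hr y = real_of_ereal (h y)" for y
  have hr: "h y = ereal (hr y)" if "y \<in> Y" for y
    using that hY hfin unfolding hr_def by (cases "h y") auto
  have hinf: "h y = \<infinity>" if "y \<notin> Y" for y using that hY by auto
  obtain ys where ys: "ys \<in> Y" and ymax: "\<forall>y\<in>Y. fh (xm y) y - hr y \<le> fh (xm ys) ys - hr ys"
    using continuous_attains_sup[OF Y(2) Y(3) continuous_on_diff[OF psi_cont hcont]]
    unfolding hr_def by blast
  define xs where "xs = xm ys"
  have xs: "xs \<in> K" "\<forall>x\<in>K. fh xs ys \<le> fh x ys" using xm[OF ys] by (auto simp: xs_def)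
  define c where "c = (p - l) / 2"
  have c: "c > 0" using pl by (simp add: c_def)
  define Kc where "Kc = 1 + 3 * \<bar>l\<bar> / (2 * c)"
  have Kc1: "Kc \<ge> 1" using c by (simp add: Kc_def)
  have fhd: "fh a u - fh a w = tf a u - tf a w" for a u w by (simp add: fh_def)
  have Dbound: "norm (xm u - xs) \<le> Kc * norm (u - ys)" if u: "u \<in> Y" for u
  proof -
    define D where "D = norm (xm u - xs)"
    define \<delta> where "\<delta> = norm (u - ys)"
    have xu: "xm u \<in> K" using xm[OF u] by blast
    have sc1: "fh xs u - fh (xm u) u \<ge> c * D\<^sup>2"
      using strong_conv[OF u xm(1)[OF u] xs(1) xm(2)[OF u]]
      by (simp add: c_def D_def norm_minus_commute)
    have sc2: "fh (xm u) ys - fh xs ys \<ge> c * D\<^sup>2"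
      using strong_conv[OF ys xs(1) xu xs(2)] by (simp add: c_def D_def)
    obtain \<xi>1 where \<xi>1: "\<xi>1 \<in> Y" "norm (\<xi>1 - ys) \<le> \<delta>" "tf xs u - tf xs ys = gy xs \<xi>1 \<bullet> (u - ys)"
      using mvt_y[OF xs(1) ys u] unfolding \<delta>_def by blast
    obtain \<xi>2 where \<xi>2: "\<xi>2 \<in> Y" "norm (\<xi>2 - ys) \<le> \<delta>" "tf (xm u) u - tf (xm u) ys = gy (xm u) \<xi>2 \<bullet> (u - ys)"
      using mvt_y[OF xu ys u] unfolding \<delta>_def by blast
    have "2 * c * D\<^sup>2 \<le> (tf xs u - tf xs ys) - (tf (xm u) u - tf (xm u) ys)"
      using sc1 sc2 fhd[of xs u ys] fhd[of "xm u" u ys] by linarith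
    also have "\<dots> = (gy xs \<xi>1 - gy (xm u) \<xi>2) \<bullet> (u - ys)" using \<xi>1 \<xi>2 by (simp add: inner_diff_left)
    also have "\<dots> \<le> norm (gy xs \<xi>1 - gy (xm u) \<xi>2) * \<delta>" unfolding \<delta>_def by (rule norm_cauchy_schwarz)
    also have "\<dots> \<le> (\<bar>l\<bar> * D + \<bar>l\<bar> * (2 * \<delta>)) * \<delta>"
    proof (rule mult_right_mono)
      have "norm (gy xs \<xi>1 - gy (xm u) \<xi>2) \<le> l * norm (xs - xm u) + l * norm (\<xi>1 - \<xi>2)"
        using gy_lip xs(1) xu \<xi>1(1) \<xi>2(1) by blast
      also have "\<dots> \<le> \<bar>l\<bar> * norm (xs - xm u) + \<bar>l\<bar> * norm (\<xi>1 - \<xi>2)"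
        by (intro add_mono mult_right_mono) auto
      also have "\<dots> \<le> \<bar>l\<bar> * D + \<bar>l\<bar> * (2 * \<delta>)"
      proof (intro add_mono mult_left_mono)
        show "norm (xs - xm u) \<le> D" by (simp add: D_def norm_minus_commute)
        have "norm (\<xi>1 - \<xi>2) \<le> norm (\<xi>1 - ys) + norm (\<xi>2 - ys)"
          using norm_triangle_ineq4[of "\<xi>1 - ys" "\<xi>2 - ys"] by simp
        then show "norm (\<xi>1 - \<xi>2) \<le> 2 * \<delta>" using \<xi>1(2) \<xi>2(2) by linarith
      qed auto
      finally show "norm (gy xs \<xi>1 - gy (xm u) \<xi>2) \<le> \<bar>l\<bar> * D + \<bar>l\<bar> * (2 * \<delta>)" .
    qed (simp add: \<delta>_def)
    finally have main: "2 * c * D\<^sup>2 \<le> (\<bar>l\<bar> * D + \<bar>l\<bar> * (2 * \<delta>)) * \<delta>" .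
    have D0: "D \<ge> 0" "\<delta> \<ge> 0" by (simp_all add: D_def \<delta>_def)
    show ?thesis
    proof (cases "D \<le> \<delta>")
      case True
      then show ?thesis using Kc1 D0 unfolding D_def \<delta>_def
        by (smt (verit) mult_right_mono mult_cancel_right1)
    next
      case False
      then have "(\<bar>l\<bar> * D + \<bar>l\<bar> * (2 * \<delta>)) * \<delta> \<le> (3 * \<bar>l\<bar> * \<delta>) * D"
        using D0 by (smt (verit, best) mult_left_mono mult_right_mono abs_ge_zero mult.commute mult.assoc
            distrib_left)
      with main have "(2 * c * D) * D \<le> (3 * \<bar>l\<bar> * \<delta>) * D" by (simp add: power2_eq_square mult.assoc)
      then have "2 * c * D \<le> 3 * \<bar>l\<bar> * \<delta>" using False D0 by (simp add: mult_le_cancel_right)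
      then have "D \<le> 3 * \<bar>l\<bar> / (2 * c) * \<delta>" using c by (simp add: field_simps)
      also have "\<dots> \<le> Kc * \<delta>" using D0 by (intro mult_right_mono) (simp_all add: Kc_def)
      finally show ?thesis by (simp add: D_def \<delta>_def)
    qed
  qed
  define v where "v = gy xs ys"
  define Lc where "Lc = \<bar>l\<bar> * (Kc + 1) + 1"
  have Lc: "Lc > 0" "\<bar>l\<bar> * (Kc + 1) \<le> Lc" proof -
    have "\<bar>l\<bar> * (Kc + 1) \<ge> 0" using Kc1 by simp
    then show "Lc > 0" "\<bar>l\<bar> * (Kc + 1) \<le> Lc" by (simp_all add: Lc_def)
  qed
  have key: "hr u - hr ys - v \<bullet> (u - ys) \<ge> - (\<bar>l\<bar> * (Kc + 1) * (norm (u - ys))\<^sup>2)" if u: "u \<in> Y" for u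
  proof -
    define \<delta> where "\<delta> = norm (u - ys)"
    have xu: "xm u \<in> K" using xm[OF u] by blast
    obtain \<xi> where \<xi>: "\<xi> \<in> Y" "norm (\<xi> - ys) \<le> \<delta>" "tf (xm u) u - tf (xm u) ys = gy (xm u) \<xi> \<bullet> (u - ys)"
      using mvt_y[OF xu ys u] unfolding \<delta>_def by blast
    have "hr u - hr ys \<ge> fh (xm u) u - fh (xm u) ys"
      using ymax u xs(2) xu unfolding xs_def by fastforce
    then have "hr u - hr ys - v \<bullet> (u - ys) \<ge> (gy (xm u) \<xi> - gy xs ys) \<bullet> (u - ys)"
      using \<xi>(3) fhd[of "xm u" u ys] by (simp add: v_def inner_diff_left)
    moreover have "- ((gy (xm u) \<xi> - gy xs ys) \<bullet> (u - ys)) \<le> norm (gy (xm u) \<xi> - gy xs ys) * \<delta>"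
      unfolding \<delta>_def using norm_cauchy_schwarz[of "- (gy (xm u) \<xi> - gy xs ys)" "u - ys"]
      by (simp only: inner_minus_left norm_minus_cancel)
    moreover have "norm (gy (xm u) \<xi> - gy xs ys) \<le> \<bar>l\<bar> * (Kc + 1) * \<delta>"
    proof -
      have "norm (gy (xm u) \<xi> - gy xs ys) \<le> l * norm (xm u - xs) + l * norm (\<xi> - ys)"
        using gy_lip xs(1) xu \<xi>(1) ys by blast
      also have "\<dots> \<le> \<bar>l\<bar> * norm (xm u - xs) + \<bar>l\<bar> * norm (\<xi> - ys)"
        by (intro add_mono mult_right_mono) auto
      also have "\<dots> \<le> \<bar>l\<bar> * (Kc * \<delta>) + \<bar>l\<bar> * \<delta>"
        using Dbound[OF u] \<xi>(2) unfolding \<delta>_def by (intro add_mono mult_left_mono) auto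
      finally show ?thesis by (simp add: algebra_simps)
    qed
    then have "norm (gy (xm u) \<xi> - gy xs ys) * \<delta> \<le> \<bar>l\<bar> * (Kc + 1) * \<delta> * \<delta>"
      by (simp add: \<delta>_def mult_right_mono)
    ultimately show ?thesis by (simp add: \<delta>_def power2_eq_square)
  qed
  have "0 \<le> Liminf (at ys) (\<lambda>u. (h u - h ys - ereal (v \<bullet> (u - ys))) / ereal (norm (u - ys)))"
  proof (subst le_Liminf_iff, intro allI impI)
    fix e :: ereal assume e: "e < 0"
    obtain \<epsilon> where \<epsilon>: "\<epsilon> > 0" "e \<le> ereal (- \<epsilon>)"
    proof (cases e)
      case (real r) then show ?thesis using e that[of "- r"] by auto
    next
      case PInf then show ?thesis using e by auto
    next
      case MInf then show ?thesis using that[of 1] by auto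
    qed
    show "eventually (\<lambda>u. e < (h u - h ys - ereal (v \<bullet> (u - ys))) / ereal (norm (u - ys))) (at ys)"
      unfolding eventually_at
    proof (intro exI[of _ "\<epsilon> / Lc"] conjI ballI impI)
      show "\<epsilon> / Lc > 0" using \<epsilon> Lc by simp
      fix u assume u: "u \<in> UNIV" "u \<noteq> ys \<and> dist u ys < \<epsilon> / Lc"
      have npos: "norm (u - ys) > 0" using u by simp
      show "e < (h u - h ys - ereal (v \<bullet> (u - ys))) / ereal (norm (u - ys))"
      proof (cases "u \<in> Y")
        case False
        then show ?thesis using hinf[OF False] hr[OF ys] npos e by (cases e) auto
      next
        case True
        define \<delta> where "\<delta> = norm (u - ys)"
        have q: "(h u - h ys - ereal (v \<bullet> (u - ys))) / ereal (norm (u - ys))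
            = ereal ((hr u - hr ys - v \<bullet> (u - ys)) / \<delta>)"
          using hr[OF True] hr[OF ys] npos by (simp add: ereal_divide \<delta>_def)
        have "\<bar>l\<bar> * (Kc + 1) * \<delta> \<le> Lc * \<delta>" using Lc npos by (simp add: \<delta>_def mult_right_mono)
        also have "\<dots> < Lc * (\<epsilon> / Lc)" using u Lc by (intro mult_strict_left_mono) (simp_all add: \<delta>_def dist_norm)
        also have "\<dots> = \<epsilon>" using Lc by simp
        finally have a: "\<bar>l\<bar> * (Kc + 1) * \<delta> < \<epsilon>" .
        have "(hr u - hr ys - v \<bullet> (u - ys)) / \<delta> \<ge> - (\<bar>l\<bar> * (Kc + 1) * \<delta>\<^sup>2) / \<delta>"
          using divide_right_mono[OF key[OF True], of \<delta>] npos by (simp add: \<delta>_def)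
        also have "- (\<bar>l\<bar> * (Kc + 1) * \<delta>\<^sup>2) / \<delta> = - (\<bar>l\<bar> * (Kc + 1) * \<delta>)"
          using npos by (simp add: \<delta>_def power2_eq_square)
        finally have "(hr u - hr ys - v \<bullet> (u - ys)) / \<delta> > - \<epsilon>" using a by linarith
        then have "ereal (- \<epsilon>) < ereal ((hr u - hr ys - v \<bullet> (u - ys)) / \<delta>)" by simp
        then show ?thesis unfolding q using \<epsilon>(2) by (rule le_less_trans[rotated])
      qed
    qed
  qed
  moreover have "\<bar>h ys\<bar> \<noteq> \<infinity>" using hr[OF ys] by simp
  ultimately have "v \<in> frechet_subdiff h ys" unfolding frechet_subdiff_def by simp
  then show ?thesis using xs ys ymax unfolding v_def hr_def xs_def by blast
qed

end

lemma stiefel_norm: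
  fixes x :: "real^'r^'d"
  assumes "transpose x ** x = mat 1"
  shows "(norm x)\<^sup>2 = real CARD('r)"
proof -
  have "(norm x)\<^sup>2 = (\<Sum>i\<in>UNIV. \<Sum>j\<in>UNIV. x$i$j * x$i$j)"
    by (simp add: power2_norm_eq_inner inner_vec_def)
  also have "\<dots> = (\<Sum>j\<in>UNIV. \<Sum>i\<in>UNIV. x$i$j * x$i$j)" by (rule sum.swap)
  also have "\<dots> = (\<Sum>j\<in>UNIV. (transpose x ** x)$j$j)"
    by (simp add: matrix_matrix_mult_def transpose_def)
  also have "\<dots> = (\<Sum>j\<in>(UNIV::'r set). 1)" using assms by (simp add: mat_def)
  finally show ?thesis by simp
qed

theorem lemma7:
  fixes f :: "real^'r^'d1 \<Rightarrow> real^'d2 \<Rightarrow> real"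
    and fx :: "real^'r^'d1 \<Rightarrow> real^'d2 \<Rightarrow> real^'r^'d1"
    and fy :: "real^'r^'d1 \<Rightarrow> real^'d2 \<Rightarrow> real^'d2"
    and h :: "real^'d2 \<Rightarrow> ereal"
    and gx :: "real^'r^'d1 \<Rightarrow> real^'d2 \<Rightarrow> real^'r^'d1"
    and gy :: "real^'r^'d1 \<Rightarrow> real^'d2 \<Rightarrow> real^'d2"
    and U :: "((real^'r^'d1) \<times> (real^'d2)) set"
    and C \<zeta> Lxx Lxy Lyx Lyy \<mu> \<rho> l p :: real
    and Y :: "(real^'d2) set"
    and z :: "real^'r^'d1"
  assumes Stiefel_ne: "(Stiefel :: (real^'r^'d1) set) \<noteq> {}"
    and C: "C > 1/2 + Sup (norm ` (Stiefel :: (real^'r^'d1) set))"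
    \<comment> \<open>(A1)\<close>
    and Y_def: "Y = {y. h y \<noteq> \<infinity>}"
    and h_proper: "\<forall>y. h y \<noteq> -\<infinity>" "Y \<noteq> {}"
    and h_closed: "closed {(y, t::real). h y \<le> ereal t}"
    and h_weakly_convex: "convex {(y, t::real). h y + ereal (\<zeta>/2 * (norm y)^2) \<le> ereal t}"
    and Y_closed: "closed Y"
    and h_loc_lip: "\<forall>y\<in>Y. \<exists>e>0. \<exists>L. L-lipschitz_on (Y \<inter> cball y e) (\<lambda>u. real_of_ereal (h u))"
    and Y_bounded: "bounded Y"
    \<comment> \<open>(A2)\<close>
    and U_open: "open U"
    and U_sub: "(Aret ` cball 0 C) \<times> Y \<subseteq> U"
    and f_deriv: "\<forall>(x, y)\<in>U. ((\<lambda>(x, y). f x y) has_derivative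
                      (\<lambda>(dx, dy). fx x y \<bullet> dx + fy x y \<bullet> dy)) (at (x, y))"
    and fx_lip: "\<forall>x1\<in>Aret ` cball 0 C. \<forall>x2\<in>Aret ` cball 0 C. \<forall>y1\<in>Y. \<forall>y2\<in>Y.
        norm (fx x1 y1 - fx x2 y2) \<le> Lxx * norm (x1 - x2) + Lxy * norm (y1 - y2)"
    and fy_lip: "\<forall>x1\<in>Aret ` cball 0 C. \<forall>x2\<in>Aret ` cball 0 C. \<forall>y1\<in>Y. \<forall>y2\<in>Y.
        norm (fy x1 y1 - fy x2 y2) \<le> Lyx * norm (x1 - x2) + Lyy * norm (y1 - y2)"
    \<comment> \<open>(A3)\<close>
    and mu_pos: "\<mu> > 0"
    and PL: "\<forall>x\<in>Aret ` cball 0 C. \<forall>y\<in>Y. frechet_subdiff h y \<noteq> {} \<longrightarrow>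
        (SUP w. ereal (f x w) - h w) - (ereal (f x y) - h y)
          \<le> ereal (1 / (2 * \<mu>) * (infdist 0 ((\<lambda>v. - fy x y + v) ` frechet_subdiff h y))^2)"
    \<comment> \<open>penalty, gradient of tilde f and its blockwise Lipschitz constant l, p > l\<close>
    and rho_pos: "\<rho> > 0"
    and tf_deriv: "\<forall>x\<in>cball 0 C. \<forall>y\<in>Y.
        ((\<lambda>(x, y). f (Aret x) y + \<rho> / 4 * (norm (cmap x))^2) has_derivative
           (\<lambda>(dx, dy). gx x y \<bullet> dx + gy x y \<bullet> dy)) (at (x, y))"
    and gx_lip: "\<forall>x1\<in>cball 0 C. \<forall>x2\<in>cball 0 C. \<forall>y1\<in>Y. \<forall>y2\<in>Y.
        norm (gx x1 y1 - gx x2 y2) \<le> l * norm (x1 - x2) + l * norm (y1 - y2)"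
    and gy_lip: "\<forall>x1\<in>cball 0 C. \<forall>x2\<in>cball 0 C. \<forall>y1\<in>Y. \<forall>y2\<in>Y.
        norm (gy x1 y1 - gy x2 y2) \<le> l * norm (x1 - x2) + l * norm (y1 - y2)"
    and p_gt: "p > l"
  shows
    "let fhat = (\<lambda>x y. f (Aret x) y + \<rho> / 4 * (norm (cmap x))^2 + p / 2 * (norm (x - z))^2);
         fhat_r = (\<lambda>x y. ereal (fhat x y) - h y);
         \<Phi> = (\<lambda>x. SUP y. fhat_r x y);
         \<Psi>r = (\<lambda>y. (INF x\<in>cball 0 C. ereal (fhat x y)) - h y);
         P = (INF x\<in>cball 0 C. \<Phi> x)
     in P = (SUP y. INF x\<in>cball 0 C. fhat_r x y)
        \<and> P = (SUP y. \<Psi>r y)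
        \<and> (\<exists>x0\<in>cball 0 C. \<Phi> x0 = P)
        \<and> (\<exists>y0. \<Psi>r y0 = P)"
proof -
  define tf where "tf x y = f (Aret x) y + \<rho> / 4 * (norm (cmap x))\<^sup>2" for x y
  define hr where "hr y = real_of_ereal (h y)" for y
  have hr: "h y = ereal (hr y)" if "y \<in> Y" for y
    using that Y_def h_proper unfolding hr_def by (cases "h y") auto
  have hinf: "h y = \<infinity>" if "y \<notin> Y" for y using that Y_def by auto
  have C0: "C > 0"
  proof -
    obtain s0 where s0: "s0 \<in> (Stiefel :: (real^'r^'d1) set)" using Stiefel_ne by blast
    have "norm x = sqrt (real CARD('r))" if "x \<in> (Stiefel :: (real^'r^'d1) set)" for x
      using stiefel_norm[of x] that unfolding Stiefel_def by (simp add: real_sqrt_unique)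
    then have "norm ` (Stiefel :: (real^'r^'d1) set) = {sqrt (real CARD('r))}" using s0 by auto
    then have "Sup (norm ` (Stiefel :: (real^'r^'d1) set)) = sqrt (real CARD('r))" by simp
    moreover have "sqrt (real CARD('r)) \<ge> 0" by simp
    ultimately show ?thesis using C by linarith
  qed
  have Yconv: "convex Y"
  proof (rule convexI)
    fix y1 y2 and u v :: real assume y: "y1 \<in> Y" "y2 \<in> Y" and uv: "0 \<le> u" "0 \<le> v" "u + v = 1"
    define E where "E = {(y, t::real). h y + ereal (\<zeta>/2 * (norm y)^2) \<le> ereal t}"
    define t1 where "t1 = hr y1 + \<zeta>/2 * (norm y1)^2"
    define t2 where "t2 = hr y2 + \<zeta>/2 * (norm y2)^2"
    have "(y1, t1) \<in> E" "(y2, t2) \<in> E" using hr y by (auto simp: E_def t1_def t2_def)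
    then have "u *\<^sub>R (y1, t1) + v *\<^sub>R (y2, t2) \<in> E"
      using h_weakly_convex uv unfolding E_def[symmetric] by (meson convexD)
    then have "h (u *\<^sub>R y1 + v *\<^sub>R y2) + ereal (\<zeta>/2 * (norm (u *\<^sub>R y1 + v *\<^sub>R y2))^2) \<le> ereal (u * t1 + v * t2)"
      by (simp add: E_def)
    then show "u *\<^sub>R y1 + v *\<^sub>R y2 \<in> Y" unfolding Y_def by auto
  qed
  have Ycomp: "compact Y" using Y_closed Y_bounded by (simp add: compact_eq_bounded_closed)
  have hcont: "continuous_on Y (\<lambda>y. real_of_ereal (h y))"
    unfolding continuous_on_eq_continuous_within
  proof
    fix y assume y: "y \<in> Y"
    obtain e L where e: "e > 0" and L: "L-lipschitz_on (Y \<inter> cball y e) (\<lambda>u. real_of_ereal (h u))"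
      using h_loc_lip y by blast
    have "continuous_on (Y \<inter> cball y e) (\<lambda>u. real_of_ereal (h u))"
      using L by (rule lipschitz_on_continuous_on)
    then have "continuous (at y within (Y \<inter> cball y e)) (\<lambda>u. real_of_ereal (h u))"
      using y e by (simp add: continuous_on_eq_continuous_within)
    moreover have "at y within (Y \<inter> cball y e) = at y within Y"
      by (rule at_within_nhd[of y "ball y e"]) (use e in auto)
    ultimately show "continuous (at y within Y) (\<lambda>u. real_of_ereal (h u))" by simp
  qed
  interpret m: mm tf gx gy "cball 0 C" Y h l p z
  proof
    show "convex (cball (0::real^'r^'d1) C)" "compact (cball (0::real^'r^'d1) C)"
      "cball (0::real^'r^'d1) C \<noteq> {}" using C0 by auto
    show "convex Y" "compact Y" "Y \<noteq> {}" using Yconv Ycomp h_proper by auto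
    show "\<forall>x\<in>cball 0 C. \<forall>y\<in>Y. ((\<lambda>(x, y). tf x y) has_derivative
           (\<lambda>(dx, dy). gx x y \<bullet> dx + gy x y \<bullet> dy)) (at (x, y))"
      using tf_deriv unfolding tf_def by simp
  qed (use gx_lip gy_lip p_gt Y_def h_proper hcont in auto)
  obtain xs ys where xs: "xs \<in> cball 0 C" and ys: "ys \<in> Y"
    and xsmin: "\<forall>x\<in>cball 0 C. m.fh xs ys \<le> m.fh x ys"
    and ymax: "\<forall>y\<in>Y. m.fh (m.xm y) y - hr y \<le> m.fh xs ys - hr ys"
    and sub: "gy xs ys \<in> frechet_subdiff h ys"
    using m.main unfolding hr_def by blast
  have gyfy: "gy xs ys = fy (Aret xs) ys"
  proof -
    have d0: "((\<lambda>y. (xs, y)) has_derivative (\<lambda>dy. (0, dy))) (at ys)"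
      by (auto intro!: derivative_eq_intros)
    have "(((\<lambda>(x, y). f (Aret x) y + \<rho> / 4 * (norm (cmap x))\<^sup>2) \<circ> (\<lambda>y. (xs, y))) has_derivative
       ((\<lambda>(dx, dy). gx xs ys \<bullet> dx + gy xs ys \<bullet> dy) \<circ> (\<lambda>dy. (0, dy)))) (at ys)"
      using diff_chain_at[OF d0] tf_deriv xs ys by blast
    then have d1: "((\<lambda>y. f (Aret xs) y + \<rho> / 4 * (norm (cmap xs))\<^sup>2) has_derivative (\<lambda>dy. gy xs ys \<bullet> dy)) (at ys)"
      by (simp add: o_def)
    have UA: "(Aret xs, ys) \<in> U" using U_sub xs ys by blast
    have d0': "((\<lambda>y. (Aret xs, y)) has_derivative (\<lambda>dy. (0, dy))) (at ys)"
      by (auto intro!: derivative_eq_intros)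
    have "(((\<lambda>(x, y). f x y) \<circ> (\<lambda>y. (Aret xs, y))) has_derivative
       ((\<lambda>(dx, dy). fx (Aret xs) ys \<bullet> dx + fy (Aret xs) ys \<bullet> dy) \<circ> (\<lambda>dy. (0, dy)))) (at ys)"
      using diff_chain_at[OF d0'] bspec[OF f_deriv UA] by simp
    then have "((\<lambda>y. f (Aret xs) y) has_derivative (\<lambda>dy. fy (Aret xs) ys \<bullet> dy)) (at ys)"
      by (simp add: o_def)
    then have d2: "((\<lambda>y. f (Aret xs) y + \<rho> / 4 * (norm (cmap xs))\<^sup>2) has_derivative (\<lambda>dy. fy (Aret xs) ys \<bullet> dy)) (at ys)"
      by (rule has_derivative_add_const)
    have "(\<lambda>dy. gy xs ys \<bullet> dy) = (\<lambda>dy. fy (Aret xs) ys \<bullet> dy)"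
      using has_derivative_unique[OF d1 d2] .
    then have "gy xs ys \<bullet> (gy xs ys - fy (Aret xs) ys) = fy (Aret xs) ys \<bullet> (gy xs ys - fy (Aret xs) ys)"
      by metis
    then have "(gy xs ys - fy (Aret xs) ys) \<bullet> (gy xs ys - fy (Aret xs) ys) = 0"
      by (simp add: inner_diff_left)
    then show ?thesis by simp
  qed
  \<comment> \<open>PL gives global maximality in y at xs\<close>
  define G where "G = (SUP w. ereal (f (Aret xs) w) - h w)"
  have "G - (ereal (f (Aret xs) ys) - h ys) \<le> ereal (1 / (2 * \<mu>) * (infdist 0 ((\<lambda>v. - fy (Aret xs) ys + v) ` frechet_subdiff h ys))\<^sup>2)"
    using PL xs ys sub unfolding G_def by blast
  moreover have "infdist 0 ((\<lambda>v. - fy (Aret xs) ys + v) ` frechet_subdiff h ys) = 0"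
  proof (rule infdist_zero)
    show "0 \<in> (\<lambda>v. - fy (Aret xs) ys + v) ` frechet_subdiff h ys"
      using sub gyfy by (intro image_eqI[of _ _ "fy (Aret xs) ys"]) auto
  qed
  ultimately have "G - ereal (f (Aret xs) ys - hr ys) \<le> 0" using hr[OF ys] by (simp add: zero_ereal_def)
  then have Gle: "G \<le> ereal (f (Aret xs) ys - hr ys)" by (cases G) auto
  define fhat where "fhat = (\<lambda>x y. f (Aret x) y + \<rho> / 4 * (norm (cmap x))^2 + p / 2 * (norm (x - z))^2)"
  define fhat_r where "fhat_r = (\<lambda>x y. ereal (fhat x y) - h y)"
  define \<Phi> where "\<Phi> = (\<lambda>x. SUP y. fhat_r x y)"
  define \<Psi>r where "\<Psi>r = (\<lambda>y. (INF x\<in>cball 0 C. ereal (fhat x y)) - h y)"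
  define P where "P = (INF x\<in>cball 0 C. \<Phi> x)"
  have fh: "m.fh x y = fhat x y" for x y by (simp add: m.fh_def tf_def fhat_def)
  define V where "V = ereal (fhat xs ys - hr ys)"
  have wmax: "fhat_r xs w \<le> V" for w
  proof -
    have "ereal (f (Aret xs) w) - h w \<le> G" unfolding G_def by (rule SUP_upper) simp
    then have a: "ereal (f (Aret xs) w) - h w \<le> ereal (f (Aret xs) ys - hr ys)" using Gle by simp
    show ?thesis
    proof (cases "w \<in> Y")
      case True
      then show ?thesis using a hr[OF True] by (simp add: fhat_r_def fhat_def V_def)
    next
      case False
      then show ?thesis using hinf[OF False] by (simp add: fhat_r_def)
    qed
  qed
  have Kne: "cball (0::real^'r^'d1) C \<noteq> {}" using C0 by auto
  have inf_eq: "(INF x\<in>cball 0 C. fhat_r x y) = \<Psi>r y \<and> \<Psi>r y \<le> V" for y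
  proof (cases "y \<in> Y")
    case True
    have mx: "m.xm y \<in> cball 0 C" "\<forall>x\<in>cball 0 C. fhat (m.xm y) y \<le> fhat x y"
      using m.xm[OF True] fh by auto
    have i1: "(INF x\<in>cball 0 C. ereal (fhat x y)) = ereal (fhat (m.xm y) y)"
    proof (rule antisym)
      show "(INF x\<in>cball 0 C. ereal (fhat x y)) \<le> ereal (fhat (m.xm y) y)"
        using mx(1) by (rule INF_lower)
      show "ereal (fhat (m.xm y) y) \<le> (INF x\<in>cball 0 C. ereal (fhat x y))"
        using mx(2) by (intro INF_greatest) simp
    qed
    have i2: "(INF x\<in>cball 0 C. fhat_r x y) = ereal (fhat (m.xm y) y - hr y)"
    proof (rule antisym)
      show "(INF x\<in>cball 0 C. fhat_r x y) \<le> ereal (fhat (m.xm y) y - hr y)"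
        using INF_lower[OF mx(1), of "\<lambda>x. fhat_r x y"] hr[OF True] by (simp add: fhat_r_def)
      show "ereal (fhat (m.xm y) y - hr y) \<le> (INF x\<in>cball 0 C. fhat_r x y)"
        using mx(2) hr[OF True] by (intro INF_greatest) (simp add: fhat_r_def)
    qed
    have "fhat (m.xm y) y - hr y \<le> fhat xs ys - hr ys" using ymax True fh by simp
    then show ?thesis using i1 i2 hr[OF True] by (simp add: \<Psi>r_def V_def)
  next
    case False
    have "(INF x\<in>cball 0 C. fhat_r x y) = -\<infinity>"
      using hinf[OF False] Kne by (simp add: fhat_r_def)
    moreover have "\<Psi>r y = -\<infinity>"
    proof -
      obtain x0 where "x0 \<in> cball (0::real^'r^'d1) C" using Kne by blast
      then have "(INF x\<in>cball 0 C. ereal (fhat x y)) \<le> ereal (fhat x0 y)" by (rule INF_lower)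
      then show ?thesis using hinf[OF False] unfolding \<Psi>r_def
        by (cases "(INF x\<in>cball 0 C. ereal (fhat x y))") auto
    qed
    ultimately show ?thesis by simp
  qed
  have Psys: "\<Psi>r ys = V"
  proof -
    have "(INF x\<in>cball 0 C. fhat_r x ys) \<ge> V"
      using xsmin fh hr[OF ys] by (intro INF_greatest) (simp add: fhat_r_def V_def)
    then show ?thesis using inf_eq[of ys] by simp
  qed
  have S1: "(SUP y. \<Psi>r y) = V"
    by (rule antisym) (use inf_eq Psys in \<open>auto intro: SUP_least SUP_upper2[of ys]\<close>)
  have S2: "(SUP y. INF x\<in>cball 0 C. fhat_r x y) = V" using S1 inf_eq by simp
  have Phixs: "\<Phi> xs \<le> V" unfolding \<Phi>_def by (rule SUP_least) (rule wmax)
  have "P \<le> \<Phi> xs" unfolding P_def using xs by (rule INF_lower)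
  moreover have "V \<le> P" unfolding P_def
  proof (rule INF_greatest)
    fix x :: "real^'r^'d1" assume x: "x \<in> cball 0 C"
    have "V = \<Psi>r ys" using Psys by simp
    also have "\<dots> = (INF x\<in>cball 0 C. fhat_r x ys)" using inf_eq by simp
    also have "\<dots> \<le> fhat_r x ys" using x by (rule INF_lower)
    also have "\<dots> \<le> \<Phi> x" unfolding \<Phi>_def by (rule SUP_upper) simp
    finally show "V \<le> \<Phi> x" .
  qed
  ultimately have PV: "P = V" "\<Phi> xs = P" using Phixs by auto
  have res: "P = (SUP y. INF x\<in>cball 0 C. fhat_r x y) \<and> P = (SUP y. \<Psi>r y)
        \<and> (\<exists>x0\<in>cball 0 C. \<Phi> x0 = P) \<and> (\<exists>y0. \<Psi>r y0 = P)"
    using PV S1 S2 Psys xs by auto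
  show ?thesis unfolding Let_def using res unfolding fhat_def fhat_r_def \<Phi>_def \<Psi>r_def P_def .
qed

end
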